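(* Let $a<0<b$, let $0<\tau<\infty$, and let $l\colon[0,\tau]\to(a,b)$ be continuously differentiable. Let $X=L^2([a,b],\mathbb{R}^2)$ and let $\mathcal{Q}^{\pm}\in\mathcal{C}^1([a,b],\mathbb{R}^{2\times2})$ be diagonal, $\mathcal{Q}^{\pm}(z)=\mathrm{diag}(q_{11}^{\pm}(z),q_{22}^{\pm}(z))$, with $mI_2\le\mathcal{Q}^{\pm}(z)\le MI_2$ for all $z\in[a,b]$ and some constants $0<m\le M$, and suppose that $$\frac{q_{11}^+}{q_{11}^-}(0)=1\quad\text{and}\quad \frac{q_{11}^+}{q_{11}^-}(z)=\frac{q_{22}^+}{q_{22}^-}(z)\ \text{ for all } z\in[a,b].$$ Let $r=0$ and let $W_B\in\mathbb{R}^{2\times4}$ satisfy $\operatorname{rank}(W_B)=2$ and $W_B\Sigma W_B^{\top}\ge0$, where $\Sigma=\begin{bmatrix}0&I_2\\ I_2&0\end{bmatrix}$. For $t\in[0,\tau]$ let $A(t)$ be the operator on $X$ defined (see context) with interface position $l(t)$. Then there exists $\omega>0$ such that for every $t\in[0,\tau]$ and every $x\in D(A(t))$, $$\langle A(t)x,x\rangle_{\mathcal{Q}_0}\le\omega\|x\|_{\mathcal{Q}_0}^2 .$$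
   Context: $P_1=\begin{bmatrix}0&-1\\-1&0\end{bmatrix}$. For an interface position $l\in(a,b)$ define the multiplication operator $\mathcal{Q}_l$ on $X$ by $(\mathcal{Q}_l x)(z)=\mathcal{Q}^-(z)x(z)$ for $z\in[a,l)$ and $(\mathcal{Q}_l x)(z)=\mathcal{Q}^+(z)x(z)$ for $z\in(l,b]$. In particular $\mathcal{Q}_0$ is this operator with $l=0$, and $X$ carries the inner product $\langle x,y\rangle_{\mathcal{Q}_0}=\frac12\int_a^b y(z)^{\top}(\mathcal{Q}_0x)(z)\,dz$ with norm $\|\cdot\|_{\mathcal{Q}_0}$. For $y=(y_1,y_2)\in X$ write $y\in D(\mathcal{J}_l)$ if $y_2\in H^1([a,b],\mathbb{R})$ and $y_1|_{(a,l)}\in H^1((a,l),\mathbb{R})$, $y_1|_{(l,b)}\in H^1((l,b),\mathbb{R})$; for such $y$, $\mathcal{J}_l y=(-y_2',\,-y_1')$ where $y_1'$ is the derivative taken separately on $(a,l)$ and $(l,b)$ (i.e. $\mathcal{J}_l$ acts as $P_1\frac{d}{dz}$ on each subinterval). For $x\in X$ with $\mathcal{Q}_lx\in D(\mathcal{J}_l)$, set the boundary flow and effort $f_\partial=\frac1{\sqrt2}P_1[(\mathcal{Q}_lx)(b)-(\mathcal{Q}_lx)(a)]\in\mathbb{R}^2$, $e_\partial=\frac1{\sqrt2}[(\mathcal{Q}_lx)(b)+(\mathcal{Q}_lx)(a)]\in\mathbb{R}^2$, the interface flow $f_I=(\mathcal{Q}_lx)_2(l)$ and the interface effort $e_I=-[(\mathcal{Q}_lx)_1(l^+)-(\mathcal{Q}_lx)_1(l^-)]$,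 where $l^\pm$ denote one-sided limits. The operator $A_{\mathcal{Q}_l}$ has domain $D(A_{\mathcal{Q}_l})=\{x\in X:\ \mathcal{Q}_lx\in D(\mathcal{J}_l),\ f_I=re_I,\ W_B\begin{bmatrix}f_\partial\\ e_\partial\end{bmatrix}=0\}$ and acts by $A_{\mathcal{Q}_l}x=\mathcal{J}_l(\mathcal{Q}_lx)$. Finally $A(t):=A_{\mathcal{Q}_{l(t)}}$. *)

theory Defs
  imports "HOL-Analysis.Analysis"
begin

definition L2_on :: "real set \<Rightarrow> (real \<Rightarrow> real) \<Rightarrow> bool" where
  "L2_on S f \<longleftrightarrow> f \<in> borel_measurable (lebesgue_on S) \<and>
                  integrable (lebesgue_on S) (\<lambda>z. (f z)^2)"

(* y restricted to (c,d) lies in H^1((c,d)); u is its absolutely continuous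
   representative on [c,d] (giving boundary / one-sided values) and g its weak
   derivative in L^2(c,d). *)
definition H1_rep :: "real \<Rightarrow> real \<Rightarrow> (real \<Rightarrow> real) \<Rightarrow> (real \<Rightarrow> real) \<Rightarrow> (real \<Rightarrow> real) \<Rightarrow> bool" where
  "H1_rep c d y u g \<longleftrightarrow> L2_on {c..d} g \<and>
     (\<forall>z\<in>{c..d}. u z = u c + integral\<^sup>L (lebesgue_on {c..z}) g) \<and>
     (AE z in lebesgue_on {c<..<d}. y z = u z)"

(* diagonal entry of the multiplication operator Q_l: Q^- left of l, Q^+ right of l
   (the value at the single point z = l is irrelevant) *)
definition Qd :: "real \<Rightarrow> (real \<Rightarrow> real) \<Rightarrow> (real \<Rightarrow> real) \<Rightarrow> real \<Rightarrow> real" where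
  "Qd l qm qp z = (if z < l then qm z else qp z)"

definition Sigma :: "real^4^4" where
  "Sigma = vector [vector [0,0,1,0], vector [0,0,0,1], vector [1,0,0,0], vector [0,1,0,0]]"

(* graph of the operator A_{Q_l}:  A_graph ... l x1 x2 y1 y2  means
   x = (x1,x2) \<in> D(A_{Q_l}) and A_{Q_l} x = (y1,y2) in X. *)
definition A_graph ::
  "real \<Rightarrow> real \<Rightarrow> (real \<Rightarrow> real) \<Rightarrow> (real \<Rightarrow> real) \<Rightarrow> (real \<Rightarrow> real) \<Rightarrow> (real \<Rightarrow> real) \<Rightarrow>
   real \<Rightarrow> real^4^2 \<Rightarrow> real \<Rightarrow>
   (real \<Rightarrow> real) \<Rightarrow> (real \<Rightarrow> real) \<Rightarrow> (real \<Rightarrow> real) \<Rightarrow> (real \<Rightarrow> real) \<Rightarrow> bool" where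
  "A_graph a b q11m q22m q11p q22p r WB l x1 x2 y1 y2 \<longleftrightarrow>
     L2_on {a..b} x1 \<and> L2_on {a..b} x2 \<and> L2_on {a..b} y1 \<and> L2_on {a..b} y2 \<and>
     (\<exists>u1m g1m u1p g1p u2 g2.
        H1_rep a l (\<lambda>z. Qd l q11m q11p z * x1 z) u1m g1m \<and>
        H1_rep l b (\<lambda>z. Qd l q11m q11p z * x1 z) u1p g1p \<and>
        H1_rep a b (\<lambda>z. Qd l q22m q22p z * x2 z) u2 g2 \<and>
        (let fI = u2 l;
             eI = - (u1p l - u1m l);
             fd1 = - (u2 b - u2 a) / sqrt 2;
             fd2 = - (u1p b - u1m a) / sqrt 2;
             ed1 = (u1p b + u1m a) / sqrt 2;
             ed2 = (u2 b + u2 a) / sqrt 2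
         in fI = r * eI \<and> WB *v vector [fd1, fd2, ed1, ed2] = 0) \<and>
        (AE z in lebesgue_on {a..b}.
            y1 z = - g2 z \<and> y2 z = - (if z < l then g1m z else g1p z)))"

definition ipQ0 ::
  "real \<Rightarrow> real \<Rightarrow> (real \<Rightarrow> real) \<Rightarrow> (real \<Rightarrow> real) \<Rightarrow> (real \<Rightarrow> real) \<Rightarrow> (real \<Rightarrow> real) \<Rightarrow>
   (real \<Rightarrow> real) \<Rightarrow> (real \<Rightarrow> real) \<Rightarrow> (real \<Rightarrow> real) \<Rightarrow> (real \<Rightarrow> real) \<Rightarrow> real" where
  "ipQ0 a b q11m q22m q11p q22p x1 x2 y1 y2 =
     1/2 * integral\<^sup>L (lebesgue_on {a..b})
       (\<lambda>z. y1 z * (Qd 0 q11m q11p z * x1 z) + y2 z * (Qd 0 q22m q22p z * x2 z))"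

definition C1_on_interval :: "real \<Rightarrow> real \<Rightarrow> (real \<Rightarrow> real) \<Rightarrow> bool" where
  "C1_on_interval c d f \<longleftrightarrow> (\<exists>f'. continuous_on {c..d} f' \<and>
      (\<forall>z\<in>{c..d}. (f has_real_derivative f' z) (at z within {c..d})))"

end

theory Submission
  imports Defs "HOL-Analysis.Analysis"
begin

lemma fub_core:
  fixes g h :: "real \<Rightarrow> real"
  assumes gi: "set_integrable lborel {c..z} g" and hi: "set_integrable lborel {c..z} h"
  shows "set_integrable lborel {c..z} (\<lambda>s. g s * (LBINT t:{c..s}. h t))"
    and "set_integrable lborel {c..z} (\<lambda>s. h s * (LBINT t:{c..s}. g t))"
    and "(LBINT s:{c..z}. g s) * (LBINT s:{c..z}. h s) =
          (LBINT s:{c..z}. g s * (LBINT t:{c..s}. h t)) + (LBINT s:{c..z}. h s * (LBINT t:{c..s}. g t))"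
proof -
  define G where "G s = indicator {c..z} s * g s" for s
  define H where "H s = indicator {c..z} s * h s" for s
  have Gi: "integrable lborel G" using gi by (simp add: G_def[abs_def] set_integrable_def)
  have Hi: "integrable lborel H" using hi by (simp add: H_def[abs_def] set_integrable_def)
  have [measurable]: "G \<in> borel_measurable borel" "H \<in> borel_measurable borel"
    using Gi Hi by auto
  define F where "F = (\<lambda>(s::real,t::real). G s * H t)"
  define P where "P = (\<lambda>(s::real,t::real). if s < t then G s * H t else 0)"
  define Q where "Q = (\<lambda>(s::real,t::real). if s < t then 0 else G s * H t)"
  have Fm[measurable]: "F \<in> borel_measurable (lborel \<Otimes>\<^sub>M lborel)" unfolding F_def by measurable
  have Pm[measurable]: "P \<in> borel_measurable (lborel \<Otimes>\<^sub>M lborel)" unfolding P_def by measurable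
  have Qm[measurable]: "Q \<in> borel_measurable (lborel \<Otimes>\<^sub>M lborel)" unfolding Q_def by measurable
  have Fi: "integrable (lborel \<Otimes>\<^sub>M lborel) F"
  proof (rule lborel_pair.Fubini_integrable[OF Fm])
    show "integrable lborel (\<lambda>x. LINT y|lborel. norm (F (x, y)))"
      by (simp add: F_def abs_mult Hi Gi)
    show "AE x in lborel. integrable lborel (\<lambda>y. F (x, y))"
      by (simp add: F_def Hi)
  qed
  have Pi: "integrable (lborel \<Otimes>\<^sub>M lborel) P"
    by (rule Bochner_Integration.integrable_bound[OF Fi Pm]) (auto simp: P_def F_def)
  have Qi: "integrable (lborel \<Otimes>\<^sub>M lborel) Q"
    by (rule Bochner_Integration.integrable_bound[OF Fi Qm]) (auto simp: Q_def F_def)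
  have FPQ: "F = (\<lambda>x. P x + Q x)" by (auto simp: F_def P_def Q_def)
  have Qin: "(LINT t|lborel. Q (s, t)) = indicator {c..z} s * (g s * (LBINT t:{c..s}. h t))" for s
  proof (cases "s \<in> {c..z}")
    case True
    have "(LINT t|lborel. Q (s, t)) = (LINT t|lborel. G s * (indicator {c..s} t * h t))"
      apply (rule Bochner_Integration.integral_cong[OF refl])
      using True by (auto simp: Q_def H_def split: split_indicator)
    then show ?thesis using True by (simp add: G_def set_lebesgue_integral_def)
  next
    case False
    then have "G s = 0" by (simp add: G_def)
    then have "(\<lambda>t. Q (s,t)) = (\<lambda>t. 0)" by (auto simp: Q_def)
    then show ?thesis using False by simp
  qed
  have Pin: "(LINT s|lborel. P (s, t)) = indicator {c..z} t * (h t * (LBINT s:{c..t}. g s))" for t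
  proof (cases "t \<in> {c..z}")
    case True
    have "(LINT s|lborel. P (s, t)) = (LINT s|lborel. H t * (indicator {c..<t} s * g s))"
      apply (rule Bochner_Integration.integral_cong[OF refl])
      using True by (auto simp: P_def G_def split: split_indicator)
    also have "\<dots> = H t * (LBINT s:{c..<t}. g s)" by (simp add: set_lebesgue_integral_def)
    also have "(LBINT s:{c..<t}. g s) = (LBINT s:{c..t}. g s)"
    proof (rule set_integral_cong_set)
      have gm: "set_borel_measurable lborel {c..z} g"
        using gi by (simp add: set_borel_measurable_def set_integrable_def)
      show "set_borel_measurable lborel {c..t} g" "set_borel_measurable lborel {c..<t} g"
        using True by (auto intro!: set_borel_measurable_subset[OF gm])
      show "AE x in lborel. (x \<in> {c..t}) = (x \<in> {c..<t})"
        using AE_lborel_singleton[of t] by eventually_elim auto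
    qed
    finally show ?thesis using True by (simp add: H_def)
  next
    case False
    then have "H t = 0" by (simp add: H_def)
    then have "(\<lambda>s. P (s,t)) = (\<lambda>s. 0)" by (auto simp: P_def)
    then show ?thesis using False by simp
  qed
  show "set_integrable lborel {c..z} (\<lambda>s. g s * (LBINT t:{c..s}. h t))"
    using lborel_pair.integrable_fst'[OF Qi] unfolding Qin by (simp add: set_integrable_def)
  show "set_integrable lborel {c..z} (\<lambda>s. h s * (LBINT t:{c..s}. g t))"
    using lborel_pair.integrable_snd[of "\<lambda>s t. P (s,t)"] Pi unfolding Pin by (simp add: set_integrable_def)
  have "integral\<^sup>L (lborel \<Otimes>\<^sub>M lborel) F = (LINT s|lborel. LINT t|lborel. F (s,t))"
    using lborel_pair.integral_fst'[OF Fi] by simp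
  also have "\<dots> = (LINT s|lborel. G s * (LINT t|lborel. H t))" by (simp add: F_def)
  also have "\<dots> = (LBINT s:{c..z}. g s) * (LBINT s:{c..z}. h s)"
    by (simp add: G_def H_def set_lebesgue_integral_def)
  finally have 1: "integral\<^sup>L (lborel \<Otimes>\<^sub>M lborel) F = (LBINT s:{c..z}. g s) * (LBINT s:{c..z}. h s)" .
  have 2: "integral\<^sup>L (lborel \<Otimes>\<^sub>M lborel) Q = (LBINT s:{c..z}. g s * (LBINT t:{c..s}. h t))"
    using lborel_pair.integral_fst'[OF Qi] unfolding Qin by (simp add: set_lebesgue_integral_def)
  have 3: "integral\<^sup>L (lborel \<Otimes>\<^sub>M lborel) P = (LBINT s:{c..z}. h s * (LBINT t:{c..s}. g t))"
    using lborel_pair.integral_snd[of "\<lambda>s t. P (s,t)"] Pi unfolding Pin by (simp add: set_lebesgue_integral_def)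
  have "integral\<^sup>L (lborel \<Otimes>\<^sub>M lborel) F = integral\<^sup>L (lborel \<Otimes>\<^sub>M lborel) P + integral\<^sup>L (lborel \<Otimes>\<^sub>M lborel) Q"
    unfolding FPQ by (rule Bochner_Integration.integral_add[OF Pi Qi])
  then show "(LBINT s:{c..z}. g s) * (LBINT s:{c..z}. h s) =
          (LBINT s:{c..z}. g s * (LBINT t:{c..s}. h t)) + (LBINT s:{c..z}. h s * (LBINT t:{c..s}. g t))"
    using 1 2 3 by simp
qed


lemma sint_cong:
  fixes f g :: "'a \<Rightarrow> real"
  shows "(\<And>x. x \<in> A \<Longrightarrow> f x = g x) \<Longrightarrow> (LINT x:A|M. f x) = (LINT x:A|M. g x)"
  unfolding set_lebesgue_integral_def
  by (rule Bochner_Integration.integral_cong) (auto split: split_indicator)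

definition ACp :: "real \<Rightarrow> real \<Rightarrow> (real\<Rightarrow>real) \<Rightarrow> (real\<Rightarrow>real) \<Rightarrow> bool" where
 "ACp c d u g \<longleftrightarrow> set_integrable lborel {c..d} g \<and> (\<forall>z\<in>{c..d}. u z = u c + (LBINT x:{c..z}. g x))"

lemma ACp_mult_aux:
  assumes u: "ACp c d u g" and v: "ACp c d v h" and z: "z \<in> {c..d}"
  shows "set_integrable lborel {c..z} (\<lambda>s. g s * v s)"
    and "set_integrable lborel {c..z} (\<lambda>s. u s * h s)"
    and "u z * v z = u c * v c + (LBINT s:{c..z}. g s * v s + u s * h s)"
proof -
  have g0: "set_integrable lborel {c..d} g" using u unfolding ACp_def by blast
  have h0: "set_integrable lborel {c..d} h" using v unfolding ACp_def by blast
  have gi: "set_integrable lborel {c..z} g"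
    by (rule set_integrable_subset[OF g0]) (use z in auto)
  have hi: "set_integrable lborel {c..z} h"
    by (rule set_integrable_subset[OF h0]) (use z in auto)
  note F = fub_core[OF gi hi]
  have ev: "v s = v c + (LBINT t:{c..s}. h t)" if "s \<in> {c..z}" for s
  proof -
    have "s \<in> {c..d}" using that z by auto
    then show ?thesis using v unfolding ACp_def by blast
  qed
  have eu: "u s = u c + (LBINT t:{c..s}. g t)" if "s \<in> {c..z}" for s
  proof -
    have "s \<in> {c..d}" using that z by auto
    then show ?thesis using u unfolding ACp_def by blast
  qed
  have i1: "set_integrable lborel {c..z} (\<lambda>s. g s * (LBINT t:{c..s}. h t) + v c * g s)"
    by (intro set_integral_add(1) F(1) set_integrable_mult_right gi)
  have i2: "set_integrable lborel {c..z} (\<lambda>s. h s * (LBINT t:{c..s}. g t) + u c * h s)"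
    by (intro set_integral_add(1) F(2) set_integrable_mult_right hi)
  show gv: "set_integrable lborel {c..z} (\<lambda>s. g s * v s)"
  proof (rule set_integrable_cong[THEN iffD1, OF refl refl _ i1])
    fix x assume x: "x \<in> {c..z}"
    show "g x * (LBINT t:{c..x}. h t) + v c * g x = g x * v x" by (simp add: ev[OF x] algebra_simps)
  qed
  show uh: "set_integrable lborel {c..z} (\<lambda>s. u s * h s)"
  proof (rule set_integrable_cong[THEN iffD1, OF refl refl _ i2])
    fix x assume x: "x \<in> {c..z}"
    show "h x * (LBINT t:{c..x}. g t) + u c * h x = u x * h x" by (simp add: eu[OF x] algebra_simps)
  qed
  have "(LBINT s:{c..z}. g s * v s + u s * h s) =
        (LBINT s:{c..z}. (g s * (LBINT t:{c..s}. h t) + v c * g s) + (h s * (LBINT t:{c..s}. g t) + u c * h s))"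
  proof (rule sint_cong)
    fix x assume x: "x \<in> {c..z}"
    show "g x * v x + u x * h x = (g x * (LBINT t:{c..x}. h t) + v c * g x) + (h x * (LBINT t:{c..x}. g t) + u c * h x)"
      by (simp add: ev[OF x] eu[OF x] algebra_simps)
  qed
  also have "\<dots> = (LBINT s:{c..z}. g s * (LBINT t:{c..s}. h t)) + v c * (LBINT s:{c..z}. g s)
     + ((LBINT s:{c..z}. h s * (LBINT t:{c..s}. g t)) + u c * (LBINT s:{c..z}. h s))"
    using F(1,2) gi hi i1 i2 by (simp add: set_integral_add)
  finally have eqI: "(LBINT s:{c..z}. g s * v s + u s * h s) = (LBINT s:{c..z}. g s * (LBINT t:{c..s}. h t)) + v c * (LBINT s:{c..z}. g s)
     + ((LBINT s:{c..z}. h s * (LBINT t:{c..s}. g t)) + u c * (LBINT s:{c..z}. h s))" .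
  then show "u z * v z = u c * v c + (LBINT s:{c..z}. g s * v s + u s * h s)"
  proof -
    have zz: "z \<in> {c..z}" using z by auto
    show ?thesis using F(3) eu[OF zz] ev[OF zz] eqI
      by (simp add: algebra_simps)
  qed
qed

lemma ACp_mult:
  assumes u: "ACp c d u g" and v: "ACp c d v h" and cd: "c \<le> d"
  shows "ACp c d (\<lambda>z. u z * v z) (\<lambda>z. g z * v z + u z * h z)"
    and "set_integrable lborel {c..d} (\<lambda>s. g s * v s)"
    and "set_integrable lborel {c..d} (\<lambda>s. u s * h s)"
proof -
  show i1: "set_integrable lborel {c..d} (\<lambda>s. g s * v s)"
   and i2: "set_integrable lborel {c..d} (\<lambda>s. u s * h s)"
    using ACp_mult_aux[OF u v, of d] cd by auto
  have "set_integrable lborel {c..d} (\<lambda>s. g s * v s + u s * h s)"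
    using i1 i2 by (rule set_integral_add(1))
  then show "ACp c d (\<lambda>z. u z * v z) (\<lambda>z. g z * v z + u z * h z)"
    unfolding ACp_def using ACp_mult_aux(3)[OF u v] by blast
qed


lemma ACp_piece:
  assumes w: "ACp c d w w'" and u: "ACp c d u g" and v: "ACp c d v h" and cd: "c \<le> d"
  shows "set_integrable lborel {c..d} (\<lambda>s. w' s * (u s * v s))"
    and "set_integrable lborel {c..d} (\<lambda>s. w s * (g s * v s + u s * h s))"
    and "(LBINT s:{c..d}. w s * (g s * v s + u s * h s)) =
           w d * (u d * v d) - w c * (u c * v c) - (LBINT s:{c..d}. w' s * (u s * v s))"
proof -
  note uv = ACp_mult(1)[OF u v cd]
  note W = ACp_mult[OF w uv cd]
  show i1: "set_integrable lborel {c..d} (\<lambda>s. w' s * (u s * v s))" using W(2) .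
  show i2: "set_integrable lborel {c..d} (\<lambda>s. w s * (g s * v s + u s * h s))" using W(3) .
  have "w d * (u d * v d) = w c * (u c * v c) + (LBINT s:{c..d}. w' s * (u s * v s) + w s * (g s * v s + u s * h s))"
  proof -
    have dd: "d \<in> {c..d}" using cd by auto
    from W(1) have "\<forall>z\<in>{c..d}. w z * (u z * v z) = w c * (u c * v c) + (LBINT s:{c..z}. w' s * (u s * v s) + w s * (g s * v s + u s * h s))"
      unfolding ACp_def by blast
    from this[rule_format, OF dd] show ?thesis .
  qed
  also have "\<dots> = w c * (u c * v c) + (LBINT s:{c..d}. w' s * (u s * v s)) + (LBINT s:{c..d}. w s * (g s * v s + u s * h s))"
    using i1 i2 by (simp add: set_integral_add)
  finally show "(LBINT s:{c..d}. w s * (g s * v s + u s * h s)) =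
           w d * (u d * v d) - w c * (u c * v c) - (LBINT s:{c..d}. w' s * (u s * v s))" by simp
qed

lemma CV:
  assumes H: "H1_rep c d y u g" and cd: "c \<le> d"
  obtains g' where "ACp c d u g'" "AE x in lebesgue. x \<in> {c..d} \<longrightarrow> g x = g' x"
proof -
  have gm: "g \<in> borel_measurable (lebesgue_on {c..d})" and g2: "integrable (lebesgue_on {c..d}) (\<lambda>z. (g z)^2)"
    using H by (auto simp: H1_rep_def L2_on_def)
  have gi: "integrable (lebesgue_on {c..d}) g"
    by (rule finite_measure.square_integrable_imp_integrable[OF finite_measure_lebesgue_on gm g2]) auto
  define G where "G x = indicator {c..d} x * g x" for x
  have Gi: "integrable lebesgue G"
    using gi by (simp add: integrable_restrict_space G_def[abs_def])
  then have "G \<in> borel_measurable (completion lborel)" by auto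
  from completion_ex_borel_measurable_real[OF this]
  obtain G' where G'm: "G' \<in> borel_measurable lborel" and ae: "AE x in lborel. G x = G' x" by blast
  have aeL: "AE x in lebesgue. G x = G' x" using AE_completion[OF ae] .
  have G'i: "integrable lborel G'"
  proof -
    have "integrable lebesgue G'" using Gi aeL G'm
      by (subst integrable_cong_AE[where g=G]) (auto simp: measurable_completion)
    then show ?thesis using G'm by (simp add: integrable_completion)
  qed
  define g' where "g' x = indicator {c..d} x * G' x" for x
  have sg': "set_integrable lborel {c..d} g'"
  proof -
    have "integrable lborel (\<lambda>x. indicator {c..d} x *\<^sub>R G' x)"
      by (rule integrable_mult_indicator) (use G'i in auto)
    moreover have "(\<lambda>x. indicator {c..d} x *\<^sub>R g' x) = (\<lambda>x. indicator {c..d} x *\<^sub>R G' x)"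
      by (auto simp: g'_def indicator_def fun_eq_iff)
    ultimately show ?thesis unfolding set_integrable_def by simp
  qed
  show ?thesis
  proof
    show "ACp c d u g'"
      unfolding ACp_def
    proof (intro conjI sg' ballI)
      fix z assume z: "z \<in> {c..d}"
      have "u z = u c + integral\<^sup>L (lebesgue_on {c..z}) g" using H z unfolding H1_rep_def by blast
      also have "integral\<^sup>L (lebesgue_on {c..z}) g = integral\<^sup>L lebesgue (\<lambda>x. indicator {c..z} x * G x)"
        using z by (auto simp: integral_restrict_space G_def indicator_def intro!: Bochner_Integration.integral_cong)
      also have "\<dots> = integral\<^sup>L lebesgue (\<lambda>x. indicator {c..z} x * G' x)"
      proof (rule integral_cong_AE)
        have Gm: "G \<in> borel_measurable lebesgue" using Gi by auto
        have G'm2: "G' \<in> borel_measurable lebesgue" using G'm by (simp add: measurable_completion)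
        show "(\<lambda>x. indicator {c..z} x * G x) \<in> borel_measurable lebesgue"
          using Gm by (intro borel_measurable_times borel_measurable_indicator) auto
        show "(\<lambda>x. indicator {c..z} x * G' x) \<in> borel_measurable lebesgue"
          using G'm2 by (intro borel_measurable_times borel_measurable_indicator) auto
        show "AE x in lebesgue. indicator {c..z} x * G x = indicator {c..z} x * G' x"
          using aeL by eventually_elim simp
      qed
      also have "\<dots> = integral\<^sup>L lborel (\<lambda>x. indicator {c..z} x * G' x)"
        by (rule integral_completion) (use G'm in auto)
      also have "\<dots> = (LBINT x:{c..z}. g' x)"
        unfolding set_lebesgue_integral_def g'_def using z
        by (auto simp: indicator_def intro!: Bochner_Integration.integral_cong)
      finally show "u z = u c + (LBINT x:{c..z}. g' x)" .
    qed
    show "AE x in lebesgue. x \<in> {c..d} \<longrightarrow> g x = g' x"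
      using aeL by eventually_elim (auto simp: G_def g'_def)
  qed
qed


lemma v4: "(vector [a,b,c,d] :: 'a::zero^4) $ 1 = a" "(vector [a,b,c,d] :: 'a^4) $ 2 = b"
   "(vector [a,b,c,d] :: 'a^4) $ 3 = c" "(vector [a,b,c,d] :: 'a^4) $ 4 = d"
  by (simp_all add: vector_def)

lemma v2: "(vector [a,b] :: 'a::zero^2) $ 1 = a" "(vector [a,b] :: 'a^2) $ 2 = b"
  by (simp_all add: vector_def)

lemma Sigma_v: "Sigma *v x = vector [x$3, x$4, x$1, x$2]"
  by (simp add: vec_eq_iff forall_4 Sigma_def matrix_vector_mult_def sum_4 v4)

lemma inner4: "(x::real^4) \<bullet> y = x$1*y$1 + x$2*y$2 + x$3*y$3 + x$4*y$4"
  by (simp add: inner_vec_def sum_4)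

lemma inner2: "(x::real^2) \<bullet> y = x$1*y$1 + x$2*y$2"
  by (simp add: inner_vec_def sum_2)

lemma Sigma_sym: "(x::real^4) \<bullet> (Sigma *v y) = (Sigma *v x) \<bullet> y"
  by (simp add: Sigma_v inner4 v4 algebra_simps)

lemma Sigma_Sigma: "Sigma *v (Sigma *v x) = x"
  by (simp add: Sigma_v vec_eq_iff forall_4 v4)

lemma transp_inner: "(transpose A *v x) \<bullet> (y::real^_) = x \<bullet> (A *v y)"
  by (simp add: dot_lmul_matrix)

lemma WB_lemma:
  fixes WB :: "real^4^2" and z :: "real^4"
  assumes rk: "rank WB = 2" and pos: "\<forall>v::real^2. 0 \<le> v \<bullet> ((WB ** Sigma ** transpose WB) *v v)"
    and kz: "WB *v z = 0"
  shows "z \<bullet> (Sigma *v z) \<le> 0"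
proof (rule ccontr)
  assume "\<not> z \<bullet> (Sigma *v z) \<le> 0"
  then have zpos: "z \<bullet> (Sigma *v z) > 0" by simp
  have inj: "inj ((*v) (transpose WB))"
    using full_rank_injective[of "transpose WB"] rk by (simp add: rank_transpose)
  define \<phi> :: "real^3 \<Rightarrow> real^2" where
    "\<phi> x = (let y = transpose WB *v (vector [x$1, x$2]) + x$3 *\<^sub>R (Sigma *v z)
            in vector [y$1 + y$3, y$2 + y$4])" for x
  have lin: "linear \<phi>"
    unfolding \<phi>_def Let_def
    by (rule linearI) (simp_all add: vec_eq_iff forall_2 v2 v4 vector_matrix_mult_def sum_2 matrix_vector_right_distrib
          matrix_vector_mult_scaleR algebra_simps vector_add_component)
  have "rank (matrix \<phi>) \<le> min CARD(2) CARD(3)" by (rule rank_bound)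
  then have "rank (matrix \<phi>) \<noteq> CARD(3)" by simp
  then obtain x where x0: "x \<noteq> 0" and bx: "matrix \<phi> *v x = 0"
    using matrix_nonfull_linear_equations_eq by blast
  have px: "\<phi> x = 0" using bx matrix_vector_mul(2)[OF lin] by metis
  define v :: "real^2" where "v = vector [x$1, x$2]"
  define c where "c = x$3"
  define y where "y = transpose WB *v v + c *\<^sub>R (Sigma *v z)"
  have y13: "y$1 + y$3 = 0" and y24: "y$2 + y$4 = 0"
    using px unfolding \<phi>_def Let_def v_def[symmetric] c_def[symmetric] y_def[symmetric]
    by (simp_all add: vec_eq_iff forall_2 v2)
  have neg: "y \<bullet> (Sigma *v y) = - 2 * ((y$1)^2 + (y$2)^2)"
  proof -
    have "y$3 = - y$1" "y$4 = - y$2" using y13 y24 by linarith+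
    then show ?thesis by (simp add: Sigma_v inner4 v4 power2_eq_square algebra_simps)
  qed
  have cross: "(transpose WB *v v) \<bullet> z = 0"
    by (simp add: dot_lmul_matrix kz)
  have expand: "y \<bullet> (Sigma *v y) = v \<bullet> ((WB ** Sigma ** transpose WB) *v v) + c^2 * (z \<bullet> (Sigma *v z))"
  proof -
    have "y \<bullet> (Sigma *v y) = (transpose WB *v v) \<bullet> (Sigma *v (transpose WB *v v))
        + c * ((transpose WB *v v) \<bullet> (Sigma *v (Sigma *v z)))
        + c * ((Sigma *v z) \<bullet> (Sigma *v (transpose WB *v v)))
        + c^2 * ((Sigma *v z) \<bullet> (Sigma *v (Sigma *v z)))"
      unfolding y_def by (simp add: matrix_vector_right_distrib matrix_vector_mult_scaleR
          inner_add_left inner_add_right power2_eq_square algebra_simps)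
    also have "(transpose WB *v v) \<bullet> (Sigma *v (transpose WB *v v)) = v \<bullet> ((WB ** Sigma ** transpose WB) *v v)"
      by (simp only: transp_inner matrix_vector_mul_assoc matrix_mul_assoc)
    also have "(transpose WB *v v) \<bullet> (Sigma *v (Sigma *v z)) = 0"
      using cross by (simp add: Sigma_Sigma)
    also have "(Sigma *v z) \<bullet> (Sigma *v (transpose WB *v v)) = 0"
      using cross by (simp add: Sigma_sym Sigma_Sigma inner_commute)
    also have "(Sigma *v z) \<bullet> (Sigma *v (Sigma *v z)) = z \<bullet> (Sigma *v z)"
      by (simp add: Sigma_Sigma inner_commute)
    finally show ?thesis by simp
  qed
  have q0: "0 \<le> v \<bullet> ((WB ** Sigma ** transpose WB) *v v)" using pos by blast
  have "0 \<le> c^2 * (z \<bullet> (Sigma *v z))" using zpos by simp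
  then have "y \<bullet> (Sigma *v y) \<ge> 0" using expand q0 by linarith
  then have "(y$1)^2 + (y$2)^2 \<le> 0" using neg by simp
  moreover have "0 \<le> (y$1)^2" "0 \<le> (y$2)^2" by simp_all
  ultimately have "(y$1)^2 = 0" "(y$2)^2 = 0" by linarith+
  then have "y$1 = 0" "y$2 = 0" by simp_all
  then have "y \<bullet> (Sigma *v y) = 0" using neg by simp
  then have "c^2 * (z \<bullet> (Sigma *v z)) = 0" using expand q0 \<open>0 \<le> c^2 * _\<close> by linarith
  then have c0: "c = 0" using zpos by simp
  have "y = 0"
  proof -
    have "y$3 = 0" "y$4 = 0" using y13 y24 \<open>y$1 = 0\<close> \<open>y$2 = 0\<close> by linarith+
    then show ?thesis using \<open>y$1 = 0\<close> \<open>y$2 = 0\<close> by (simp add: vec_eq_iff forall_4)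
  qed
  then have "transpose WB *v v = 0" using c0 by (simp add: y_def)
  then have "v = 0" using inj by (metis injD matrix_vector_mult_0_right)
  then have "x$1 = 0" "x$2 = 0" by (simp_all add: v_def vec_eq_iff forall_2 v2)
  then have "x = 0" using c0 by (simp add: c_def vec_eq_iff forall_3)
  then show False using x0 by simp
qed


lemma ACp_sub:
  assumes A: "ACp c d u g" and cc: "c \<le> c'" "c' \<le> d'" "d' \<le> d"
  shows "ACp c' d' u g"
proof -
  have g0: "set_integrable lborel {c..d} g" using A unfolding ACp_def by blast
  have eq: "\<forall>z\<in>{c..d}. u z = u c + (LBINT x:{c..z}. g x)" using A unfolding ACp_def by blast
  have gi: "set_integrable lborel {c'..d'} g"
    by (rule set_integrable_subset[OF g0]) (use cc in auto)
  have split: "(LBINT x:{c..z}. g x) = (LBINT x:{c..c'}. g x) + (LBINT x:{c'..z}. g x)"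
    if z: "z \<in> {c'..d'}" for z
  proof -
    have "{c..z} = {c..c'} \<union> {c'<..z}" using z cc by auto
    then have "(LBINT x:{c..z}. g x) = (LBINT x:{c..c'}. g x) + (LBINT x:{c'<..z}. g x)"
    proof -
      have i1: "set_integrable lborel {c..c'} g" by (rule set_integrable_subset[OF g0]) (use z cc in auto)
      have i2: "set_integrable lborel {c'<..z} g" by (rule set_integrable_subset[OF g0]) (use z cc in auto)
      have "(LBINT x:{c..c'} \<union> {c'<..z}. g x) = (LBINT x:{c..c'}. g x) + (LBINT x:{c'<..z}. g x)"
        by (rule set_integral_Un[OF _ i1 i2]) auto
      then show ?thesis using \<open>{c..z} = _\<close> by simp
    qed
    also have "(LBINT x:{c'<..z}. g x) = (LBINT x:{c'..z}. g x)"
    proof (rule set_integral_cong_set)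
      have gm: "set_borel_measurable lborel {c..d} g"
        using g0 by (simp add: set_borel_measurable_def set_integrable_def)
      show "set_borel_measurable lborel {c'..z} g" "set_borel_measurable lborel {c'<..z} g"
        using z cc by (auto intro!: set_borel_measurable_subset[OF gm])
      show "AE x in lborel. (x \<in> {c'..z}) = (x \<in> {c'<..z})"
        using AE_lborel_singleton[of c'] by eventually_elim auto
    qed
    finally show ?thesis .
  qed
  show ?thesis
    unfolding ACp_def
  proof (intro conjI gi ballI)
    fix z assume z: "z \<in> {c'..d'}"
    have z1: "z \<in> {c..d}" and c1: "c' \<in> {c..d}" using z cc by auto
    have "u z = u c + (LBINT x:{c..z}. g x)" using eq z1 by blast
    also have "\<dots> = (u c + (LBINT x:{c..c'}. g x)) + (LBINT x:{c'..z}. g x)"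
      using split[OF z] by simp
    also have "u c + (LBINT x:{c..c'}. g x) = u c'" using eq c1 by metis
    finally show "u z = u c' + (LBINT x:{c'..z}. g x)" .
  qed
qed

lemma prod_bound:
  fixes w u v x1 x2 K M :: real
  assumes "\<bar>w\<bar> \<le> K" "\<bar>u\<bar> \<le> M * \<bar>x1\<bar>" "\<bar>v\<bar> \<le> M * \<bar>x2\<bar>" "0 \<le> M"
  shows "w * (u * v) \<le> K * M^2 / 2 * (x1^2 + x2^2)"
proof -
  have K0: "0 \<le> K" using assms(1) by linarith
  have "w * (u * v) \<le> \<bar>w\<bar> * (\<bar>u\<bar> * \<bar>v\<bar>)" by (simp add: abs_mult[symmetric])
  also have "\<dots> \<le> K * ((M * \<bar>x1\<bar>) * (M * \<bar>x2\<bar>))"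
    using assms by (intro mult_mono) (auto intro: mult_mono)
  also have "\<dots> = K * M^2 * (\<bar>x1\<bar> * \<bar>x2\<bar>)" by (simp add: power2_eq_square algebra_simps)
  also have "\<dots> \<le> K * M^2 * ((x1^2 + x2^2) / 2)"
  proof (rule mult_left_mono)
    have "0 \<le> (\<bar>x1\<bar> - \<bar>x2\<bar>)^2" by simp
    then show "\<bar>x1\<bar> * \<bar>x2\<bar> \<le> (x1^2 + x2^2) / 2" by (simp add: power2_eq_square algebra_simps)
  qed (use K0 in simp)
  finally show ?thesis by simp
qed

lemma J_bound:
  fixes w' u v x1 x2 :: "real \<Rightarrow> real"
  assumes si: "set_integrable lborel {c..d} (\<lambda>z. w' z * (u z * v z))"
    and wb: "\<forall>z\<in>{c..d}. \<bar>w' z\<bar> \<le> K" and M0: "0 \<le> M"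
    and ae: "AE z in lebesgue. z \<in> {c<..<d} \<longrightarrow> \<bar>u z\<bar> \<le> M * \<bar>x1 z\<bar> \<and> \<bar>v z\<bar> \<le> M * \<bar>x2 z\<bar>"
    and xi: "integrable lebesgue (\<lambda>z. indicator {c..d} z * ((x1 z)^2 + (x2 z)^2))"
  shows "(LBINT z:{c..d}. w' z * (u z * v z)) \<le> K * M^2 / 2 * integral\<^sup>L lebesgue (\<lambda>z. indicator {c..d} z * ((x1 z)^2 + (x2 z)^2))"
proof -
  let ?f = "\<lambda>z. indicator {c..d} z * (w' z * (u z * v z))"
  have fi: "integrable lborel ?f" using si by (simp add: set_integrable_def)
  have fm: "?f \<in> borel_measurable lborel" using fi by auto
  have "(LBINT z:{c..d}. w' z * (u z * v z)) = integral\<^sup>L lborel ?f"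
    by (simp add: set_lebesgue_integral_def)
  also have "\<dots> = integral\<^sup>L lebesgue ?f" by (rule integral_completion[symmetric]) (use fm in simp)
  also have "\<dots> \<le> integral\<^sup>L lebesgue (\<lambda>z. K * M^2 / 2 * (indicator {c..d} z * ((x1 z)^2 + (x2 z)^2)))"
  proof (rule integral_mono_AE)
    show "integrable lebesgue ?f" using fi fm by (simp add: integrable_completion)
    show "integrable lebesgue (\<lambda>z. K * M^2 / 2 * (indicator {c..d} z * ((x1 z)^2 + (x2 z)^2)))"
      using xi by simp
    have "AE z in lebesgue. z \<noteq> c" "AE z in lebesgue. z \<noteq> d"
      using AE_completion[OF AE_lborel_singleton] by auto
    then show "AE z in lebesgue. ?f z \<le> K * M^2 / 2 * (indicator {c..d} z * ((x1 z)^2 + (x2 z)^2))"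
      using ae
    proof eventually_elim
      case (elim z)
      show ?case
      proof (cases "z \<in> {c<..<d}")
        case True
        then have "z \<in> {c..d}" by auto
        then show ?thesis using True elim wb prod_bound[of "w' z" K "u z" M "x1 z" "v z" "x2 z"] M0
          by (simp add: indicator_def)
      next
        case False
        then have "z \<notin> {c..d}" using elim by auto
        then show ?thesis by simp
      qed
    qed
  qed
  also have "\<dots> = K * M^2 / 2 * integral\<^sup>L lebesgue (\<lambda>z. indicator {c..d} z * ((x1 z)^2 + (x2 z)^2))"
    by simp
  finally show ?thesis .
qed

lemma Qd_meas:
  assumes "continuous_on {a..b} qm" "continuous_on {a..b} qp"
  shows "Qd l qm qp \<in> borel_measurable (lebesgue_on {a..b})"
proof -
  have m1: "qm \<in> borel_measurable (lebesgue_on {a..b})" "qp \<in> borel_measurable (lebesgue_on {a..b})"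
    using assms by (auto intro: continuous_imp_measurable_on_sets_lebesgue)
  have "(\<lambda>z. if z < l then qm z else qp z) \<in> borel_measurable (lebesgue_on {a..b})"
    by (rule measurable_If[OF m1]) (auto simp: sets_restrict_space_iff)
  then show ?thesis unfolding Qd_def[abs_def] .
qed


lemma Icc_leb: fixes c d :: real shows "{c..d} \<in> sets lebesgue" "{c<..<d} \<in> sets lebesgue" "{c<..d} \<in> sets lebesgue"
  by (rule sets_completionI_sets; simp add: atLeastAtMost_borel greaterThanLessThan_borel greaterThanAtMost_borel)+

lemma int_sub:
  fixes f :: "real \<Rightarrow> real"
  assumes "integrable lebesgue (\<lambda>z. indicator {a..b} z * f z)" "{c..d} \<subseteq> {a..b}"
  shows "integrable lebesgue (\<lambda>z. indicator {c..d} z * (f z::real))"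
proof -
  have "integrable lebesgue (\<lambda>z. indicator {c..d} z *\<^sub>R (indicator {a..b} z * f z))"
    by (rule integrable_mult_indicator) (use assms Icc_leb in auto)
  moreover have "(\<lambda>z. indicator {c..d} z *\<^sub>R (indicator {a..b} z * f z)) = (\<lambda>z. indicator {c..d} z * f z)"
    using assms(2) by (auto simp: fun_eq_iff indicator_def)
  ultimately show ?thesis by simp
qed

lemma L2_int:
  assumes "L2_on {a..b} x1" "L2_on {a..b} x2"
  shows "integrable lebesgue (\<lambda>z. indicator {a..b} z * ((x1 z)^2 + (x2 z)^2))"
    and "integral\<^sup>L (lebesgue_on {a..b}) (\<lambda>z. (x1 z)^2 + (x2 z)^2) = integral\<^sup>L lebesgue (\<lambda>z. indicator {a..b} z * ((x1 z)^2 + (x2 z)^2))"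
proof -
  have "integrable (lebesgue_on {a..b}) (\<lambda>z. (x1 z)^2 + (x2 z)^2)"
    using assms by (auto simp: L2_on_def)
  then show "integrable lebesgue (\<lambda>z. indicator {a..b} z * ((x1 z)^2 + (x2 z)^2))"
    by (simp add: integrable_restrict_space)
  show "integral\<^sup>L (lebesgue_on {a..b}) (\<lambda>z. (x1 z)^2 + (x2 z)^2) = integral\<^sup>L lebesgue (\<lambda>z. indicator {a..b} z * ((x1 z)^2 + (x2 z)^2))"
    by (simp add: integral_restrict_space)
qed

lemma AE_leb_on:
  fixes c d :: real
  assumes "AE z in lebesgue_on {c<..<d}. P z"
  shows "AE z in lebesgue. z \<in> {c<..<d} \<longrightarrow> P z"
  using assms by (subst (asm) AE_restrict_space_iff) (auto simp: Icc_leb)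

lemma AE_leb_on2:
  fixes c d :: real
  assumes "AE z in lebesgue_on {c..d}. P z"
  shows "AE z in lebesgue. z \<in> {c..d} \<longrightarrow> P z"
  using assms by (subst (asm) AE_restrict_space_iff) (auto simp: Icc_leb)

lemma main_est:
  fixes x1 x2 y1 y2 w1 w1' w2 w2' :: "real \<Rightarrow> real" and WB :: "real^4^2"
  assumes aL: "a < L" "L < b"
   and AG: "A_graph a b q11m q22m q11p q22p 0 WB L x1 x2 y1 y2"
   and rk: "rank WB = 2" and pos: "\<forall>v::real^2. 0 \<le> v \<bullet> ((WB ** Sigma ** transpose WB) *v v)"
   and cont: "continuous_on {a..b} q11m" "continuous_on {a..b} q11p"
             "continuous_on {a..b} q22m" "continuous_on {a..b} q22p"
   and qb: "\<forall>z\<in>{a..b}. 0 < q11m z \<and> q11m z \<le> M \<and> 0 < q22m z \<and> q22m z \<le> M \<and>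
                    0 < q11p z \<and> q11p z \<le> M \<and> 0 < q22p z \<and> q22p z \<le> M"
   and w1: "ACp a L w1 w1'" and w2: "ACp L b w2 w2'" and w1a: "w1 a = 1" and w2b: "w2 b = 1"
   and w1b: "\<forall>z\<in>{a..L}. \<bar>w1' z\<bar> \<le> K" and w2b': "\<forall>z\<in>{L..b}. \<bar>w2' z\<bar> \<le> K"
   and R1: "\<forall>z\<in>{a..b}. z < L \<longrightarrow> Qd 0 q11m q11p z = w1 z * Qd L q11m q11p z \<and> Qd 0 q22m q22p z = w1 z * Qd L q22m q22p z"
   and R2: "\<forall>z\<in>{a..b}. L < z \<longrightarrow> Qd 0 q11m q11p z = w2 z * Qd L q11m q11p z \<and> Qd 0 q22m q22p z = w2 z * Qd L q22m q22p z"
  shows "ipQ0 a b q11m q22m q11p q22p y1 y2 x1 x2 \<le> K * M^2 / 4 * integral\<^sup>L (lebesgue_on {a..b}) (\<lambda>z. (x1 z)^2 + (x2 z)^2)"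
proof -
  have M0: "0 \<le> M" using qb aL by force
  have L2: "L2_on {a..b} x1" "L2_on {a..b} x2" "L2_on {a..b} y1" "L2_on {a..b} y2"
    using AG unfolding A_graph_def by blast+
  from AG[unfolded A_graph_def] obtain u1m g1m u1p g1p u2 g2 where
     Hm: "H1_rep a L (\<lambda>z. Qd L q11m q11p z * x1 z) u1m g1m" and
     Hp: "H1_rep L b (\<lambda>z. Qd L q11m q11p z * x1 z) u1p g1p" and
     H2: "H1_rep a b (\<lambda>z. Qd L q22m q22p z * x2 z) u2 g2" and
     LET: "let fI = u2 L;
             eI = - (u1p L - u1m L);
             fd1 = - (u2 b - u2 a) / sqrt 2;
             fd2 = - (u1p b - u1m a) / sqrt 2;
             ed1 = (u1p b + u1m a) / sqrt 2;
             ed2 = (u2 b + u2 a) / sqrt 2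
         in fI = 0 * eI \<and> WB *v vector [fd1, fd2, ed1, ed2] = 0" and
     AEy: "AE z in lebesgue_on {a..b}. y1 z = - g2 z \<and> y2 z = - (if z < L then g1m z else g1p z)"
    by blast
  have u2L: "u2 L = 0" using LET by (simp add: Let_def)
  define zz :: "real^4" where "zz = vector [- (u2 b - u2 a) / sqrt 2, - (u1p b - u1m a) / sqrt 2,
      (u1p b + u1m a) / sqrt 2, (u2 b + u2 a) / sqrt 2]"
  have WBz: "WB *v zz = 0" using LET by (simp add: Let_def zz_def)
  have bdry: "u1m a * u2 a \<le> u1p b * u2 b"
  proof -
    have "zz \<bullet> (Sigma *v zz) \<le> 0" by (rule WB_lemma[OF rk pos WBz])
    moreover have "zz \<bullet> (Sigma *v zz) = - 2 * (u1p b * u2 b - u1m a * u2 a)"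
      by (simp add: zz_def Sigma_v inner4 v4 field_simps)
    ultimately show ?thesis by simp
  qed
  obtain G1m where AC1m: "ACp a L u1m G1m" and ae1m: "AE x in lebesgue. x \<in> {a..L} \<longrightarrow> g1m x = G1m x"
    using CV[OF Hm] aL by auto
  obtain G1p where AC1p: "ACp L b u1p G1p" and ae1p: "AE x in lebesgue. x \<in> {L..b} \<longrightarrow> g1p x = G1p x"
    using CV[OF Hp] aL by auto
  obtain G2 where AC2: "ACp a b u2 G2" and ae2: "AE x in lebesgue. x \<in> {a..b} \<longrightarrow> g2 x = G2 x"
    using CV[OF H2] aL by auto
  have AC2a: "ACp a L u2 G2" by (rule ACp_sub[OF AC2]) (use aL in auto)
  have AC2b: "ACp L b u2 G2" by (rule ACp_sub[OF AC2]) (use aL in auto)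
  note P1 = ACp_piece[OF w1 AC1m AC2a, OF less_imp_le[OF aL(1)]]
  note P2 = ACp_piece[OF w2 AC1p AC2b, OF less_imp_le[OF aL(2)]]
  define \<psi>1 where "\<psi>1 s = w1 s * (G1m s * u2 s + u1m s * G2 s)" for s
  define \<psi>2 where "\<psi>2 s = w2 s * (G1p s * u2 s + u1p s * G2 s)" for s
  define \<Psi> where "\<Psi> z = indicator {a..L} z * \<psi>1 z + indicator {L<..b} z * \<psi>2 z" for z
  define \<Phi> where "\<Phi> z = x1 z * (Qd 0 q11m q11p z * y1 z) + x2 z * (Qd 0 q22m q22p z * y2 z)" for z
  have si1: "set_integrable lborel {a..L} \<psi>1" using P1(2) unfolding \<psi>1_def[abs_def] .
  have si2': "set_integrable lborel {L..b} \<psi>2" using P2(2) unfolding \<psi>2_def[abs_def] .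
  have si2: "set_integrable lborel {L<..b} \<psi>2" by (rule set_integrable_subset[OF si2']) auto
  have \<Psi>i: "integrable lborel \<Psi>"
    using si1 si2 unfolding set_integrable_def \<Psi>_def[abs_def] by simp
  have \<Psi>m: "\<Psi> \<in> borel_measurable lborel" using \<Psi>i by auto
  have aeE1m: "AE z in lebesgue. z \<in> {a<..<L} \<longrightarrow> Qd L q11m q11p z * x1 z = u1m z"
    using Hm unfolding H1_rep_def by (intro AE_leb_on) blast
  have aeE1p: "AE z in lebesgue. z \<in> {L<..<b} \<longrightarrow> Qd L q11m q11p z * x1 z = u1p z"
    using Hp unfolding H1_rep_def by (intro AE_leb_on) blast
  have aeE2: "AE z in lebesgue. z \<in> {a<..<b} \<longrightarrow> Qd L q22m q22p z * x2 z = u2 z"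
    using H2 unfolding H1_rep_def by (intro AE_leb_on) blast
  have aeY: "AE z in lebesgue. z \<in> {a..b} \<longrightarrow> y1 z = - g2 z \<and> y2 z = - (if z < L then g1m z else g1p z)"
    using AEy by (rule AE_leb_on2)
  have aeNa: "AE z in lebesgue. z \<noteq> a" and aeNL: "AE z in lebesgue. z \<noteq> L" and aeNb: "AE z in lebesgue. z \<noteq> b"
    using AE_completion[OF AE_lborel_singleton] by auto
  have aeEq: "AE z in lebesgue. z \<in> {a..b} \<longrightarrow> \<Phi> z = - \<Psi> z"
    using aeE1m aeE1p aeE2 aeY ae1m ae1p ae2 aeNa aeNL aeNb
  proof eventually_elim
    case (elim z)
    show ?case
    proof
      assume z: "z \<in> {a..b}"
      show "\<Phi> z = - \<Psi> z"
      proof (cases "z < L")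
        case True
        then have zi: "z \<in> {a<..<L}" "z \<in> {a<..<b}" "z \<in> {a..L}" "z \<notin> {L<..b}" using z elim by auto
        have r: "Qd 0 q11m q11p z = w1 z * Qd L q11m q11p z" "Qd 0 q22m q22p z = w1 z * Qd L q22m q22p z"
          using R1 z True by auto
        have "\<Phi> z = - (w1 z * (G1m z * (Qd L q22m q22p z * x2 z) + (Qd L q11m q11p z * x1 z) * G2 z))"
          using elim zi z True unfolding \<Phi>_def r by (simp add: algebra_simps)
        also have "\<dots> = - \<psi>1 z" using elim zi by (simp add: \<psi>1_def)
        finally show ?thesis using zi by (simp add: \<Psi>_def)
      next
        case False
        then have zi: "z \<in> {L<..<b}" "z \<in> {a<..<b}" "z \<in> {L..b}" "z \<notin> {a..L}" "z \<in> {L<..b}" using z elim by auto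
        have r: "Qd 0 q11m q11p z = w2 z * Qd L q11m q11p z" "Qd 0 q22m q22p z = w2 z * Qd L q22m q22p z"
          using R2 z False elim by auto
        have "\<Phi> z = - (w2 z * (G1p z * (Qd L q22m q22p z * x2 z) + (Qd L q11m q11p z * x1 z) * G2 z))"
          using elim zi z False unfolding \<Phi>_def r by (simp add: algebra_simps)
        also have "\<dots> = - \<psi>2 z" using elim zi by (simp add: \<psi>2_def)
        finally show ?thesis using zi by (simp add: \<Psi>_def)
      qed
    qed
  qed
  have Lm: "x1 \<in> borel_measurable (lebesgue_on {a..b})" "x2 \<in> borel_measurable (lebesgue_on {a..b})"
     "y1 \<in> borel_measurable (lebesgue_on {a..b})" "y2 \<in> borel_measurable (lebesgue_on {a..b})"
    using L2 by (auto simp: L2_on_def)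
  have Qm: "Qd 0 q11m q11p \<in> borel_measurable (lebesgue_on {a..b})" "Qd 0 q22m q22p \<in> borel_measurable (lebesgue_on {a..b})"
    using cont by (auto intro: Qd_meas)
  have \<Phi>m: "\<Phi> \<in> borel_measurable (lebesgue_on {a..b})"
    unfolding \<Phi>_def[abs_def] using Lm Qm by (intro borel_measurable_add borel_measurable_times) auto
  have \<Psi>m2: "(\<lambda>z. - \<Psi> z) \<in> borel_measurable (lebesgue_on {a..b})"
    using \<Psi>m by (intro borel_measurable_uminus measurable_restrict_space1) (simp add: measurable_completion)
  have intPhi: "integral\<^sup>L (lebesgue_on {a..b}) \<Phi> = - ((LBINT s:{a..L}. \<psi>1 s) + (LBINT s:{L..b}. \<psi>2 s))"
  proof -
    have "integral\<^sup>L (lebesgue_on {a..b}) \<Phi> = integral\<^sup>L (lebesgue_on {a..b}) (\<lambda>z. - \<Psi> z)"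
    proof (rule integral_cong_AE[OF \<Phi>m \<Psi>m2])
      show "AE z in lebesgue_on {a..b}. \<Phi> z = - \<Psi> z"
        using aeEq by (subst AE_restrict_space_iff) auto
    qed
    also have "\<dots> = integral\<^sup>L lebesgue (\<lambda>z. indicator {a..b} z * (- \<Psi> z))"
      by (simp add: integral_restrict_space)
    also have "\<dots> = integral\<^sup>L lebesgue (\<lambda>z. - \<Psi> z)"
      by (rule Bochner_Integration.integral_cong) (use aL in \<open>auto simp: \<Psi>_def indicator_def\<close>)
    also have "\<dots> = integral\<^sup>L lborel (\<lambda>z. - \<Psi> z)"
      by (rule integral_completion) (use \<Psi>m in simp)
    also have "\<dots> = - integral\<^sup>L lborel \<Psi>" by simp
    also have "integral\<^sup>L lborel \<Psi> = (LBINT s:{a..L}. \<psi>1 s) + (LBINT s:{L<..b}. \<psi>2 s)"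
      using si1 si2 unfolding \<Psi>_def[abs_def] set_lebesgue_integral_def set_integrable_def by simp
    also have "(LBINT s:{L<..b}. \<psi>2 s) = (LBINT s:{L..b}. \<psi>2 s)"
    proof (rule set_integral_cong_set)
      have gm: "set_borel_measurable lborel {L..b} \<psi>2"
        using si2' by (simp add: set_borel_measurable_def set_integrable_def)
      show "set_borel_measurable lborel {L..b} \<psi>2" "set_borel_measurable lborel {L<..b} \<psi>2"
        by (auto intro!: set_borel_measurable_subset[OF gm])
      show "AE x in lborel. (x \<in> {L..b}) = (x \<in> {L<..b})"
        using AE_lborel_singleton[of L] by eventually_elim auto
    qed
    finally show ?thesis .
  qed
  define J1 where "J1 = (LBINT s:{a..L}. w1' s * (u1m s * u2 s))"
  define J2 where "J2 = (LBINT s:{L..b}. w2' s * (u1p s * u2 s))"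
  have S1: "(LBINT s:{a..L}. \<psi>1 s) = - (u1m a * u2 a) - J1"
    using P1(3) u2L w1a unfolding \<psi>1_def J1_def by simp
  have S2: "(LBINT s:{L..b}. \<psi>2 s) = u1p b * u2 b - J2"
    using P2(3) u2L w2b unfolding \<psi>2_def J2_def by simp
  have ipeq: "ipQ0 a b q11m q22m q11p q22p y1 y2 x1 x2 = 1/2 * integral\<^sup>L (lebesgue_on {a..b}) \<Phi>"
    by (simp add: ipQ0_def \<Phi>_def[abs_def])
  define F where "F z = indicator {a..b} z * ((x1 z)^2 + (x2 z)^2)" for z
  note L2i = L2_int[OF L2(1,2)]
  have Fi: "integrable lebesgue (\<lambda>z. indicator {a..L} z * ((x1 z)^2 + (x2 z)^2))"
    "integrable lebesgue (\<lambda>z. indicator {L..b} z * ((x1 z)^2 + (x2 z)^2))"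
    using aL by (auto intro!: int_sub[OF L2i(1)])
  have Qbnd: "\<bar>Qd L q11m q11p z * x\<bar> \<le> M * \<bar>x\<bar>" "\<bar>Qd L q22m q22p z * x\<bar> \<le> M * \<bar>x\<bar>"
    if "z \<in> {a..b}" for z x
  proof -
    have "0 < Qd L q11m q11p z \<and> Qd L q11m q11p z \<le> M" "0 < Qd L q22m q22p z \<and> Qd L q22m q22p z \<le> M"
      using qb that by (auto simp: Qd_def)
    then show "\<bar>Qd L q11m q11p z * x\<bar> \<le> M * \<bar>x\<bar>" "\<bar>Qd L q22m q22p z * x\<bar> \<le> M * \<bar>x\<bar>"
      by (auto simp: abs_mult intro!: mult_right_mono)
  qed
  have J1b: "J1 \<le> K * M^2 / 2 * integral\<^sup>L lebesgue (\<lambda>z. indicator {a..L} z * ((x1 z)^2 + (x2 z)^2))"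
    unfolding J1_def
  proof (rule J_bound[OF P1(1) w1b M0 _ Fi(1)])
    show "AE z in lebesgue. z \<in> {a<..<L} \<longrightarrow> \<bar>u1m z\<bar> \<le> M * \<bar>x1 z\<bar> \<and> \<bar>u2 z\<bar> \<le> M * \<bar>x2 z\<bar>"
      using aeE1m aeE2
    proof eventually_elim
      case (elim z)
      show ?case
      proof
        assume z: "z \<in> {a<..<L}"
        then have "z \<in> {a..b}" "z \<in> {a<..<b}" using aL by auto
        then show "\<bar>u1m z\<bar> \<le> M * \<bar>x1 z\<bar> \<and> \<bar>u2 z\<bar> \<le> M * \<bar>x2 z\<bar>"
          using elim z Qbnd by metis
      qed
    qed
  qed
  have J2b: "J2 \<le> K * M^2 / 2 * integral\<^sup>L lebesgue (\<lambda>z. indicator {L..b} z * ((x1 z)^2 + (x2 z)^2))"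
    unfolding J2_def
  proof (rule J_bound[OF P2(1) w2b' M0 _ Fi(2)])
    show "AE z in lebesgue. z \<in> {L<..<b} \<longrightarrow> \<bar>u1p z\<bar> \<le> M * \<bar>x1 z\<bar> \<and> \<bar>u2 z\<bar> \<le> M * \<bar>x2 z\<bar>"
      using aeE1p aeE2
    proof eventually_elim
      case (elim z)
      show ?case
      proof
        assume z: "z \<in> {L<..<b}"
        then have "z \<in> {a..b}" "z \<in> {a<..<b}" using aL by auto
        then show "\<bar>u1p z\<bar> \<le> M * \<bar>x1 z\<bar> \<and> \<bar>u2 z\<bar> \<le> M * \<bar>x2 z\<bar>"
          using elim z Qbnd by metis
      qed
    qed
  qed
  have sumI: "integral\<^sup>L lebesgue (\<lambda>z. indicator {a..L} z * ((x1 z)^2 + (x2 z)^2))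
      + integral\<^sup>L lebesgue (\<lambda>z. indicator {L..b} z * ((x1 z)^2 + (x2 z)^2))
      = integral\<^sup>L lebesgue (\<lambda>z. indicator {a..b} z * ((x1 z)^2 + (x2 z)^2))"
  proof -
    have "integral\<^sup>L lebesgue (\<lambda>z. indicator {a..L} z * ((x1 z)^2 + (x2 z)^2))
      + integral\<^sup>L lebesgue (\<lambda>z. indicator {L..b} z * ((x1 z)^2 + (x2 z)^2))
      = integral\<^sup>L lebesgue (\<lambda>z. indicator {a..L} z * ((x1 z)^2 + (x2 z)^2) + indicator {L..b} z * ((x1 z)^2 + (x2 z)^2))"
      using Fi by (rule Bochner_Integration.integral_add[symmetric])
    also have "\<dots> = integral\<^sup>L lebesgue (\<lambda>z. indicator {a..b} z * ((x1 z)^2 + (x2 z)^2))"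
    proof (rule integral_cong_AE)
      show "(\<lambda>z. indicator {a..L} z * ((x1 z)^2 + (x2 z)^2) + indicator {L..b} z * ((x1 z)^2 + (x2 z)^2)) \<in> borel_measurable lebesgue"
        using Fi by auto
      show "(\<lambda>z. indicator {a..b} z * ((x1 z)^2 + (x2 z)^2)) \<in> borel_measurable lebesgue"
        using L2i(1) by auto
      show "AE z in lebesgue. indicator {a..L} z * ((x1 z)^2 + (x2 z)^2) + indicator {L..b} z * ((x1 z)^2 + (x2 z)^2)
               = indicator {a..b} z * ((x1 z)^2 + (x2 z)^2)"
        using aeNL by eventually_elim (use aL in \<open>auto simp: indicator_def\<close>)
    qed
    finally show ?thesis .
  qed
  have "ipQ0 a b q11m q22m q11p q22p y1 y2 x1 x2 = 1/2 * (u1m a * u2 a - u1p b * u2 b) + 1/2 * (J1 + J2)"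
    by (simp only: ipeq intPhi S1 S2) (simp add: algebra_simps)
  also have "\<dots> \<le> 1/2 * (J1 + J2)"
  proof -
    have "1/2 * (u1m a * u2 a - u1p b * u2 b) \<le> 0" using bdry by simp
    then show ?thesis by linarith
  qed
  also have "\<dots> \<le> 1/2 * (K * M^2 / 2 * integral\<^sup>L lebesgue (\<lambda>z. indicator {a..b} z * ((x1 z)^2 + (x2 z)^2)))"
  proof -
    define A1 where "A1 = integral\<^sup>L lebesgue (\<lambda>z. indicator {a..L} z * ((x1 z)^2 + (x2 z)^2))"
    define A2 where "A2 = integral\<^sup>L lebesgue (\<lambda>z. indicator {L..b} z * ((x1 z)^2 + (x2 z)^2))"
    define C where "C = K * M^2 / 2"
    have "J1 + J2 \<le> C * A1 + C * A2" using J1b J2b unfolding A1_def A2_def C_def by linarith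
    also have "\<dots> = C * (A1 + A2)" by (simp add: distrib_left)
    finally have "J1 + J2 \<le> C * (A1 + A2)" .
    then show ?thesis using sumI unfolding A1_def A2_def C_def by simp
  qed
  also have "\<dots> = K * M^2 / 4 * integral\<^sup>L (lebesgue_on {a..b}) (\<lambda>z. (x1 z)^2 + (x2 z)^2)"
    using L2i(2) by simp
  finally show ?thesis .
qed


lemma FTC_sub:
  fixes r r' :: "real \<Rightarrow> real"
  assumes der: "\<forall>z\<in>{a..b}. (r has_real_derivative r' z) (at z within {a..b})"
    and cont: "continuous_on {a..b} r'" and cz: "a \<le> c" "c \<le> z" "z \<le> b"
  shows "(LBINT x:{c..z}. r' x) = r z - r c" and "set_integrable lborel {c..z} r'"
proof -
  have "integral\<^sup>L lborel (\<lambda>x. indicator {c..z} x *\<^sub>R r' x) = r z - r c"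
  proof (rule integral_FTC_atLeastAtMost[OF cz(2)])
    fix x assume "c \<le> x" "x \<le> z"
    then have "(r has_real_derivative r' x) (at x within {a..b})" using der cz by auto
    then have "(r has_real_derivative r' x) (at x within {c..z})"
      by (rule has_field_derivative_subset) (use cz in auto)
    then show "(r has_vector_derivative r' x) (at x within {c..z})"
      by (simp add: has_real_derivative_iff_has_vector_derivative)
  next
    show "continuous_on {c..z} r'" by (rule continuous_on_subset[OF cont]) (use cz in auto)
  qed
  then show "(LBINT x:{c..z}. r' x) = r z - r c" by (simp add: set_lebesgue_integral_def)
  show "set_integrable lborel {c..z} r'"
    by (rule borel_integrable_atLeastAtMost', rule continuous_on_subset[OF cont]) (use cz in auto)
qed

lemma ACp_const: "ACp c d (\<lambda>_. 1) (\<lambda>_. 0)"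
  unfolding ACp_def set_integrable_def set_lebesgue_integral_def by simp

lemma w_pos:
  fixes r r' :: "real \<Rightarrow> real"
  assumes der: "\<forall>z\<in>{a..b}. (r has_real_derivative r' z) (at z within {a..b})"
    and cont: "continuous_on {a..b} r'" and a0: "a < 0" and L: "0 \<le> L" "L \<le> b" and r0: "r 0 = 1"
  shows "ACp a L (\<lambda>z. if z < 0 then 1 else r z) (\<lambda>z. if z < 0 then 0 else r' z)"
proof -
  let ?w = "\<lambda>z. if z < 0 then 1 else r z" and ?w' = "\<lambda>z. if z < 0 then 0 else r' z"
  have ind: "indicator {a..z} x *\<^sub>R ?w' x = indicator {0..z} x *\<^sub>R r' x" for z x
    using a0 by (auto simp: indicator_def)
  have si: "set_integrable lborel {a..L} ?w'"
    using FTC_sub(2)[OF der cont, of 0 L] a0 L unfolding set_integrable_def ind by simp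
  show ?thesis
    unfolding ACp_def
  proof (intro conjI si ballI)
    fix z assume z: "z \<in> {a..L}"
    have eqi: "(LBINT x:{a..z}. ?w' x) = (LBINT x:{0..z}. r' x)"
      unfolding set_lebesgue_integral_def ind ..
    show "?w z = ?w a + (LBINT x:{a..z}. ?w' x)"
    proof (cases "z < 0")
      case True
      then show ?thesis using a0 unfolding eqi by (simp add: set_lebesgue_integral_def)
    next
      case False
      then show ?thesis using a0 z L FTC_sub(1)[OF der cont, of 0 z] r0 unfolding eqi by simp
    qed
  qed
qed

lemma w_neg:
  fixes r r' :: "real \<Rightarrow> real"
  assumes der: "\<forall>z\<in>{a..b}. (r has_real_derivative r' z) (at z within {a..b})"
    and cont: "continuous_on {a..b} r'" and b0: "0 < b" and L: "L < 0" "a \<le> L" and r0: "r 0 = 1"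
  shows "ACp L b (\<lambda>z. if z < 0 then r z else 1) (\<lambda>z. if z < 0 then r' z else 0)"
proof -
  let ?w = "\<lambda>z. if z < 0 then r z else 1" and ?w' = "\<lambda>z. if z < 0 then r' z else 0"
  have ind: "indicator {L..z} x *\<^sub>R ?w' x = indicator ({L..z} \<inter> {..<0}) x *\<^sub>R r' x" for z x
    by (auto simp: indicator_def)
  have si0: "set_integrable lborel {L..0} r'" using FTC_sub(2)[OF der cont, of L 0] L b0 by simp
  have si: "set_integrable lborel {L..b} ?w'"
  proof -
    have "set_integrable lborel ({L..b} \<inter> {..<0}) r'"
      by (rule set_integrable_subset[OF si0]) (use b0 in auto)
    then show ?thesis unfolding set_integrable_def ind .
  qed
  have null0: "(LBINT x:{L..<0}. r' x) = (LBINT x:{L..0}. r' x)"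
  proof (rule set_integral_cong_set)
    have gm: "set_borel_measurable lborel {L..0} r'"
      using si0 by (simp add: set_borel_measurable_def set_integrable_def)
    show "set_borel_measurable lborel {L..0} r'" "set_borel_measurable lborel {L..<0} r'"
      by (auto intro!: set_borel_measurable_subset[OF gm])
    show "AE x in lborel. (x \<in> {L..0}) = (x \<in> {L..<0})"
      using AE_lborel_singleton[of 0] by eventually_elim auto
  qed
  show ?thesis
    unfolding ACp_def
  proof (intro conjI si ballI)
    fix z assume z: "z \<in> {L..b}"
    have eqi: "(LBINT x:{L..z}. ?w' x) = (LBINT x:({L..z} \<inter> {..<0}). r' x)"
      unfolding set_lebesgue_integral_def ind ..
    show "?w z = ?w L + (LBINT x:{L..z}. ?w' x)"
    proof (cases "z < 0")
      case True
      then have "{L..z} \<inter> {..<0} = {L..z}" by auto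
      then show ?thesis using True L z FTC_sub(1)[OF der cont, of L z] unfolding eqi by simp
    next
      case False
      then have "{L..z} \<inter> {..<0} = {L..<0}" by auto
      then show ?thesis using False L z b0 FTC_sub(1)[OF der cont, of L 0] r0 null0 unfolding eqi by simp
    qed
  qed
qed

lemma ipQ0_lower:
  assumes L2: "L2_on {a..b} x1" "L2_on {a..b} x2"
   and cont: "continuous_on {a..b} q11m" "continuous_on {a..b} q11p"
             "continuous_on {a..b} q22m" "continuous_on {a..b} q22p"
   and qb: "\<forall>z\<in>{a..b}. m \<le> q11m z \<and> q11m z \<le> M \<and> m \<le> q22m z \<and> q22m z \<le> M \<and>
                    m \<le> q11p z \<and> q11p z \<le> M \<and> m \<le> q22p z \<and> q22p z \<le> M"
   and m0: "0 < m"
  shows "m / 2 * integral\<^sup>L (lebesgue_on {a..b}) (\<lambda>z. (x1 z)^2 + (x2 z)^2) \<le> ipQ0 a b q11m q22m q11p q22p x1 x2 x1 x2"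
proof -
  have Lm: "x1 \<in> borel_measurable (lebesgue_on {a..b})" "x2 \<in> borel_measurable (lebesgue_on {a..b})"
    using L2 by (auto simp: L2_on_def)
  have Li: "integrable (lebesgue_on {a..b}) (\<lambda>z. (x1 z)^2)" "integrable (lebesgue_on {a..b}) (\<lambda>z. (x2 z)^2)"
    using L2 by (auto simp: L2_on_def)
  have Qm: "Qd 0 q11m q11p \<in> borel_measurable (lebesgue_on {a..b})" "Qd 0 q22m q22p \<in> borel_measurable (lebesgue_on {a..b})"
    using cont by (auto intro: Qd_meas)
  have Qb: "m \<le> Qd 0 q11m q11p z \<and> Qd 0 q11m q11p z \<le> M \<and> m \<le> Qd 0 q22m q22p z \<and> Qd 0 q22m q22p z \<le> M"
    if "z \<in> {a..b}" for z
    using qb that by (auto simp: Qd_def)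
  let ?g = "\<lambda>z. x1 z * (Qd 0 q11m q11p z * x1 z) + x2 z * (Qd 0 q22m q22p z * x2 z)"
  have gm: "?g \<in> borel_measurable (lebesgue_on {a..b})"
    using Lm Qm by (intro borel_measurable_add borel_measurable_times) auto
  have sq: "x1 z * (Qd 0 q11m q11p z * x1 z) = Qd 0 q11m q11p z * (x1 z)^2"
     "x2 z * (Qd 0 q22m q22p z * x2 z) = Qd 0 q22m q22p z * (x2 z)^2" for z
    by (simp_all add: power2_eq_square algebra_simps)
  have bnds: "m * (x1 z)^2 \<le> Qd 0 q11m q11p z * (x1 z)^2" "Qd 0 q11m q11p z * (x1 z)^2 \<le> M * (x1 z)^2"
     "m * (x2 z)^2 \<le> Qd 0 q22m q22p z * (x2 z)^2" "Qd 0 q22m q22p z * (x2 z)^2 \<le> M * (x2 z)^2"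
     "0 \<le> m * (x1 z)^2" "0 \<le> m * (x2 z)^2"
    if z: "z \<in> {a..b}" for z
    using Qb[OF z] m0 by (auto intro!: mult_right_mono)
  have gi: "integrable (lebesgue_on {a..b}) ?g"
  proof (rule Bochner_Integration.integrable_bound[OF _ gm])
    show "integrable (lebesgue_on {a..b}) (\<lambda>z. M * ((x1 z)^2 + (x2 z)^2))" using Li by auto
    show "AE z in lebesgue_on {a..b}. norm (?g z) \<le> norm (M * ((x1 z)^2 + (x2 z)^2))"
    proof (rule AE_I2)
      fix z assume "z \<in> space (lebesgue_on {a..b})"
      then have z: "z \<in> {a..b}" by simp
      have M0: "0 \<le> M" using Qb[OF z] m0 by linarith
      have "0 \<le> ?g z" "?g z \<le> M * ((x1 z)^2 + (x2 z)^2)"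
        unfolding sq using bnds[OF z] by (simp_all add: algebra_simps)
      moreover have "0 \<le> M * ((x1 z)^2 + (x2 z)^2)" using M0 by simp
      ultimately show "norm (?g z) \<le> norm (M * ((x1 z)^2 + (x2 z)^2))" by simp
    qed
  qed
  have "integral\<^sup>L (lebesgue_on {a..b}) (\<lambda>z. m * ((x1 z)^2 + (x2 z)^2)) \<le> integral\<^sup>L (lebesgue_on {a..b}) ?g"
  proof (rule integral_mono[OF _ gi])
    show "integrable (lebesgue_on {a..b}) (\<lambda>z. m * ((x1 z)^2 + (x2 z)^2))" using Li by auto
    fix z assume "z \<in> space (lebesgue_on {a..b})"
    then have z: "z \<in> {a..b}" by simp
    show "m * ((x1 z)^2 + (x2 z)^2) \<le> ?g z"
      unfolding sq using bnds[OF z] by (simp add: algebra_simps)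
  qed
  then show ?thesis using Li by (simp add: ipQ0_def)
qed


lemma C1_cont:
  assumes "C1_on_interval a b f" shows "continuous_on {a..b} f"
proof -
  obtain f' where "\<forall>z\<in>{a..b}. (f has_real_derivative f' z) (at z within {a..b})"
    using assms unfolding C1_on_interval_def by blast
  then show ?thesis
    unfolding continuous_on_eq_continuous_within using DERIV_continuous by blast
qed

lemma ratio_C1:
  assumes p: "C1_on_interval a b p" and q: "C1_on_interval a b q" and qpos: "\<forall>z\<in>{a..b}. 0 < q z"
  obtains r' where "continuous_on {a..b} r'"
    "\<forall>z\<in>{a..b}. ((\<lambda>z. p z / q z) has_real_derivative r' z) (at z within {a..b})"
proof -
  obtain p' where p1: "continuous_on {a..b} p'" and p2: "\<forall>z\<in>{a..b}. (p has_real_derivative p' z) (at z within {a..b})"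
    using p unfolding C1_on_interval_def by blast
  obtain q' where q1: "continuous_on {a..b} q'" and q2: "\<forall>z\<in>{a..b}. (q has_real_derivative q' z) (at z within {a..b})"
    using q unfolding C1_on_interval_def by blast
  have pc: "continuous_on {a..b} p" and qc: "continuous_on {a..b} q" using p q by (auto intro: C1_cont)
  show ?thesis
  proof
    show "continuous_on {a..b} (\<lambda>z. (p' z * q z - p z * q' z) / (q z * q z))"
      using qpos by (intro continuous_intros p1 q1 pc qc) auto
    show "\<forall>z\<in>{a..b}. ((\<lambda>z. p z / q z) has_real_derivative (p' z * q z - p z * q' z) / (q z * q z)) (at z within {a..b})"
      using p2 q2 qpos by (auto intro!: DERIV_divide)
  qed
qed

lemma cont_bound:
  fixes f :: "real \<Rightarrow> real"
  assumes "continuous_on {a..b} f" obtains B where "\<forall>z\<in>{a..b}. \<bar>f z\<bar> \<le> B"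
proof -
  have "bounded (f ` {a..b})" by (rule compact_imp_bounded[OF compact_continuous_image[OF assms compact_Icc]])
  then obtain B where "\<forall>x\<in>f ` {a..b}. \<bar>x\<bar> \<le> B" by (auto simp: bounded_real)
  then show ?thesis using that by auto
qed

theorem theorem1:
  fixes a b \<tau> m M :: real
    and l :: "real \<Rightarrow> real"
    and q11m q22m q11p q22p :: "real \<Rightarrow> real"
    and WB :: "real^4^2"
  assumes "a < 0" and "0 < b" and "0 < \<tau>"
    and "C1_on_interval 0 \<tau> l" and "\<forall>t\<in>{0..\<tau>}. l t \<in> {a<..<b}"
    and "C1_on_interval a b q11m" and "C1_on_interval a b q22m"
    and "C1_on_interval a b q11p" and "C1_on_interval a b q22p"
    and "0 < m" and "m \<le> M"
    and "\<forall>z\<in>{a..b}. m \<le> q11m z \<and> q11m z \<le> M \<and> m \<le> q22m z \<and> q22m z \<le> M \<and>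
                    m \<le> q11p z \<and> q11p z \<le> M \<and> m \<le> q22p z \<and> q22p z \<le> M"
    and "q11p 0 / q11m 0 = 1"
    and "\<forall>z\<in>{a..b}. q11p z / q11m z = q22p z / q22m z"
    and "rank WB = 2"
    and "\<forall>v::real^2. 0 \<le> v \<bullet> ((WB ** Sigma ** transpose WB) *v v)"
  shows "\<exists>\<omega>>0. \<forall>t\<in>{0..\<tau>}. \<forall>x1 x2 y1 y2.
           A_graph a b q11m q22m q11p q22p 0 WB (l t) x1 x2 y1 y2 \<longrightarrow>
           ipQ0 a b q11m q22m q11p q22p y1 y2 x1 x2
             \<le> \<omega> * ipQ0 a b q11m q22m q11p q22p x1 x2 x1 x2"
proof -
  note assms = assms
  have a0: "a < 0" and b0: "0 < b" and m0: "0 < m" and mM: "m \<le> M" using assms by auto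
  have qb: "\<forall>z\<in>{a..b}. m \<le> q11m z \<and> q11m z \<le> M \<and> m \<le> q22m z \<and> q22m z \<le> M \<and>
                    m \<le> q11p z \<and> q11p z \<le> M \<and> m \<le> q22p z \<and> q22p z \<le> M" using assms by blast
  have qb': "\<forall>z\<in>{a..b}. 0 < q11m z \<and> q11m z \<le> M \<and> 0 < q22m z \<and> q22m z \<le> M \<and>
                    0 < q11p z \<and> q11p z \<le> M \<and> 0 < q22p z \<and> q22p z \<le> M"
    using qb m0 by force
  have rat: "\<forall>z\<in>{a..b}. q11p z / q11m z = q22p z / q22m z" using assms by blast
  have r0: "q11p 0 / q11m 0 = 1" using assms by blast
  have C1: "C1_on_interval a b q11m" "C1_on_interval a b q22m" "C1_on_interval a b q11p" "C1_on_interval a b q22p"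
    using assms by blast+
  have cont: "continuous_on {a..b} q11m" "continuous_on {a..b} q11p"
             "continuous_on {a..b} q22m" "continuous_on {a..b} q22p"
    using C1 by (auto intro: C1_cont)
  have rk: "rank WB = 2" and pos: "\<forall>v::real^2. 0 \<le> v \<bullet> ((WB ** Sigma ** transpose WB) *v v)"
    using assms by blast+
  have lin: "\<forall>t\<in>{0..\<tau>}. l t \<in> {a<..<b}" using assms by blast
  obtain r1' where r1c: "continuous_on {a..b} r1'"
    and r1d: "\<forall>z\<in>{a..b}. ((\<lambda>z. q11p z / q11m z) has_real_derivative r1' z) (at z within {a..b})"
    using ratio_C1[OF C1(3) C1(1)] qb' by blast
  obtain r2' where r2c: "continuous_on {a..b} r2'"
    and r2d: "\<forall>z\<in>{a..b}. ((\<lambda>z. q11m z / q11p z) has_real_derivative r2' z) (at z within {a..b})"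
    using ratio_C1[OF C1(1) C1(3)] qb' by blast
  obtain B1 where B1: "\<forall>z\<in>{a..b}. \<bar>r1' z\<bar> \<le> B1" using cont_bound[OF r1c] by blast
  obtain B2 where B2: "\<forall>z\<in>{a..b}. \<bar>r2' z\<bar> \<le> B2" using cont_bound[OF r2c] by blast
  define K where "K = \<bar>B1\<bar> + \<bar>B2\<bar>"
  have K0: "0 \<le> K" by (simp add: K_def)
  have K1: "\<forall>z\<in>{a..b}. \<bar>r1' z\<bar> \<le> K" and K2: "\<forall>z\<in>{a..b}. \<bar>r2' z\<bar> \<le> K"
    using B1 B2 unfolding K_def by force+
  have q0: "q11m 0 = q11p 0" using r0 qb' a0 b0
    by (metis atLeastAtMost_iff divide_eq_1_iff less_imp_le)
  have r10: "(\<lambda>z. q11p z / q11m z) 0 = 1" using r0 by simp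
  have z0: "(0::real) \<in> {a..b}" using a0 b0 by auto
  have "q11p 0 > 0" using qb' z0 by blast
  then have r20: "(\<lambda>z. q11m z / q11p z) 0 = 1" using q0 by simp
  define \<omega> where "\<omega> = K * M^2 / (2 * m) + 1"
  have C0: "0 \<le> K * M^2 / (2 * m)" using K0 m0 by simp
  show ?thesis
  proof (intro exI[of _ \<omega>] conjI ballI allI impI)
    show "0 < \<omega>" using C0 by (simp add: \<omega>_def)
    fix t x1 x2 y1 y2
    assume t: "t \<in> {0..\<tau>}" and AG: "A_graph a b q11m q22m q11p q22p 0 WB (l t) x1 x2 y1 y2"
    define L where "L = l t"
    have aL: "a < L" "L < b" using lin t by (auto simp: L_def)
    have AG': "A_graph a b q11m q22m q11p q22p 0 WB L x1 x2 y1 y2" using AG by (simp add: L_def)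
    have L2: "L2_on {a..b} x1" "L2_on {a..b} x2" using AG unfolding A_graph_def by blast+
    define I2 where "I2 = integral\<^sup>L (lebesgue_on {a..b}) (\<lambda>z. (x1 z)^2 + (x2 z)^2)"
    have est: "ipQ0 a b q11m q22m q11p q22p y1 y2 x1 x2 \<le> K * M^2 / 4 * I2"
    proof (cases "0 \<le> L")
      case True
      show ?thesis unfolding I2_def
      proof (rule main_est[OF aL AG' rk pos cont qb' w_pos[OF r1d r1c a0 True less_imp_le[OF aL(2)] r10] ACp_const])
        show "(if a < 0 then 1 else q11p a / q11m a) = 1" using a0 by simp
        show "(1::real) = 1" by simp
        show "\<forall>z\<in>{a..L}. \<bar>if z < 0 then 0 else r1' z\<bar> \<le> K" using K1 K0 aL by auto
        show "\<forall>z\<in>{L..b}. \<bar>0::real\<bar> \<le> K" using K0 by simp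
        show "\<forall>z\<in>{a..b}. z < L \<longrightarrow> Qd 0 q11m q11p z = (if z < 0 then 1 else q11p z / q11m z) * Qd L q11m q11p z \<and>
                Qd 0 q22m q22p z = (if z < 0 then 1 else q11p z / q11m z) * Qd L q22m q22p z"
        proof (intro ballI impI)
          fix z assume z: "z \<in> {a..b}" and zL: "z < L"
          have pos1: "q11m z \<noteq> 0" "q22m z \<noteq> 0" using qb' z by force+
          have rz: "q11p z / q11m z = q22p z / q22m z" using rat z by blast
          show "Qd 0 q11m q11p z = (if z < 0 then 1 else q11p z / q11m z) * Qd L q11m q11p z \<and>
                Qd 0 q22m q22p z = (if z < 0 then 1 else q11p z / q11m z) * Qd L q22m q22p z"
          proof (cases "z < 0")
            case True
            then show ?thesis using zL by (simp add: Qd_def)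
          next
            case False
            have e1: "q11p z / q11m z * q11m z = q11p z" using pos1 by simp
            have e2: "q11p z / q11m z * q22m z = q22p z" unfolding rz using pos1 by simp
            have Qs: "Qd L q11m q11p z = q11m z" "Qd L q22m q22p z = q22m z"
              "Qd 0 q11m q11p z = q11p z" "Qd 0 q22m q22p z = q22p z" using zL False by (simp_all add: Qd_def)
            show ?thesis unfolding Qs using False e1 e2 by (simp only: if_False; simp)
          qed
        qed
        show "\<forall>z\<in>{a..b}. L < z \<longrightarrow> Qd 0 q11m q11p z = 1 * Qd L q11m q11p z \<and> Qd 0 q22m q22p z = 1 * Qd L q22m q22p z"
          using True by (auto simp: Qd_def)
      qed
    next
      case False
      then have Ln: "L < 0" by simp
      show ?thesis unfolding I2_def
      proof (rule main_est[OF aL AG' rk pos cont qb' ACp_const w_neg[OF r2d r2c b0 Ln less_imp_le[OF aL(1)] r20]])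
        show "(1::real) = 1" by simp
        show "(if b < 0 then q11m b / q11p b else 1) = 1" using b0 by simp
        show "\<forall>z\<in>{L..b}. \<bar>if z < 0 then r2' z else 0\<bar> \<le> K" using K2 K0 aL by auto
        show "\<forall>z\<in>{a..L}. \<bar>0::real\<bar> \<le> K" using K0 by simp
        show "\<forall>z\<in>{a..b}. z < L \<longrightarrow> Qd 0 q11m q11p z = 1 * Qd L q11m q11p z \<and> Qd 0 q22m q22p z = 1 * Qd L q22m q22p z"
          using Ln by (auto simp: Qd_def)
        show "\<forall>z\<in>{a..b}. L < z \<longrightarrow> Qd 0 q11m q11p z = (if z < 0 then q11m z / q11p z else 1) * Qd L q11m q11p z \<and>
                Qd 0 q22m q22p z = (if z < 0 then q11m z / q11p z else 1) * Qd L q22m q22p z"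
        proof (intro ballI impI)
          fix z assume z: "z \<in> {a..b}" and zL: "L < z"
          have pos1: "q11m z \<noteq> 0" "q22m z \<noteq> 0" "q11p z \<noteq> 0" "q22p z \<noteq> 0" using qb' z by force+
          have rz: "q11p z / q11m z = q22p z / q22m z" using rat z by blast
          then have rz': "q11m z / q11p z = q22m z / q22p z"
            by (metis inverse_divide)
          show "Qd 0 q11m q11p z = (if z < 0 then q11m z / q11p z else 1) * Qd L q11m q11p z \<and>
                Qd 0 q22m q22p z = (if z < 0 then q11m z / q11p z else 1) * Qd L q22m q22p z"
          proof (cases "z < 0")
            case False
            then show ?thesis using zL by (simp add: Qd_def)
          next
            case True
            have e1: "q11m z / q11p z * q11p z = q11m z" using pos1 by simp
            have e2: "q11m z / q11p z * q22p z = q22m z" unfolding rz' using pos1 by simp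
            have Qs: "Qd L q11m q11p z = q11p z" "Qd L q22m q22p z = q22p z"
              "Qd 0 q11m q11p z = q11m z" "Qd 0 q22m q22p z = q22m z" using zL True by (simp_all add: Qd_def)
            show ?thesis unfolding Qs using True e1 e2 by (simp only: if_True; simp)
          qed
        qed
      qed
    qed
    have low: "m / 2 * I2 \<le> ipQ0 a b q11m q22m q11p q22p x1 x2 x1 x2"
      unfolding I2_def by (rule ipQ0_lower[OF L2 cont qb m0])
    have I20: "0 \<le> I2" unfolding I2_def by (rule Bochner_Integration.integral_nonneg) auto
    have "K * M^2 / 4 * I2 = K * M^2 / (2 * m) * (m / 2 * I2)" using m0 by (simp add: field_simps)
    also have "\<dots> \<le> K * M^2 / (2 * m) * ipQ0 a b q11m q22m q11p q22p x1 x2 x1 x2"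
      by (rule mult_left_mono[OF low C0])
    also have "\<dots> \<le> \<omega> * ipQ0 a b q11m q22m q11p q22p x1 x2 x1 x2"
    proof -
      have "0 \<le> m / 2 * I2" using m0 I20 by simp
      then have "0 \<le> ipQ0 a b q11m q22m q11p q22p x1 x2 x1 x2" using low by linarith
      then show ?thesis unfolding \<omega>_def by (simp add: algebra_simps)
    qed
    finally show "ipQ0 a b q11m q22m q11p q22p y1 y2 x1 x2 \<le> \<omega> * ipQ0 a b q11m q22m q11p q22p x1 x2 x1 x2"
      using est by linarith
  qed
qed


end
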